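(* Let $P,Q,R\in\mathbb P_d$, and let $U_P:=\operatorname{Pol}(P^{1/2}R^{1/2})$ and $U_Q:=\operatorname{Pol}(Q^{1/2}R^{1/2})$. Then $$\operatorname{B}_R(P,Q)=\big\|U_P^*P^{1/2}-U_Q^*Q^{1/2}\big\|_2^2,$$ where $\|A\|_2=\sqrt{\operatorname{Tr}[A^*A]}$ is the Frobenius norm.
   Context: $\mathbb P_d$ is the set of $d\times d$ complex positive definite matrices. For an invertible matrix $A$, $\operatorname{Pol}(A):=A(A^*A)^{-1/2}$ is the unitary polar factor. The generalized fidelity is $\operatorname{F}_R(P,Q):=\operatorname{Tr}\big[\sqrt{R^{1/2}PR^{1/2}}\,R^{-1}\sqrt{R^{1/2}QR^{1/2}}\big]$ and the squared generalized Bures distance is $\operatorname{B}_R(P,Q):=\operatorname{Tr}[P+Q]-2\,\mathrm{Re}\,\operatorname{F}_R(P,Q)$. *)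

theory Defs
  imports "HOL-Analysis.Analysis"
begin

text \<open>Square complex matrices of size d = CARD('n), as elements of complex^'n^'n.\<close>

definition adj :: "complex^'n^'n \<Rightarrow> complex^'n^'n" where
  "adj A = (\<chi> i j. cnj (A $ j $ i))"

definition cinner_form :: "complex^'n^'n \<Rightarrow> complex^'n \<Rightarrow> complex" where
  "cinner_form A x = (\<Sum>i\<in>UNIV. cnj (x $ i) * (A *v x) $ i)"

definition hermitian :: "complex^'n^'n \<Rightarrow> bool" where
  "hermitian A \<longleftrightarrow> adj A = A"

definition psd :: "complex^'n^'n \<Rightarrow> bool" where
  "psd A \<longleftrightarrow> hermitian A \<and> (\<forall>x. 0 \<le> Re (cinner_form A x))"

definition posdef :: "complex^'n^'n \<Rightarrow> bool" where
  "posdef A \<longleftrightarrow> hermitian A \<and> (\<forall>x. x \<noteq> 0 \<longrightarrow> 0 < Re (cinner_form A x))"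

definition msqrt :: "complex^'n^'n \<Rightarrow> complex^'n^'n" where
  "msqrt A = (THE S. psd S \<and> S ** S = A)"

definition Pol :: "complex^'n^'n \<Rightarrow> complex^'n^'n" where
  "Pol A = A ** matrix_inv (msqrt (adj A ** A))"

definition gen_fidelity :: "complex^'n^'n \<Rightarrow> complex^'n^'n \<Rightarrow> complex^'n^'n \<Rightarrow> complex" where
  "gen_fidelity R P Q =
     trace (msqrt (msqrt R ** P ** msqrt R) ** matrix_inv R ** msqrt (msqrt R ** Q ** msqrt R))"

definition gen_bures :: "complex^'n^'n \<Rightarrow> complex^'n^'n \<Rightarrow> complex^'n^'n \<Rightarrow> complex" where
  "gen_bures R P Q = trace (P + Q) - 2 * complex_of_real (Re (gen_fidelity R P Q))"

definition frob_norm :: "complex^'n^'n \<Rightarrow> real" where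
  "frob_norm A = sqrt (Re (trace (adj A ** A)))"

end

theory Submission
  imports Defs
begin

definition ci :: "complex^'n \<Rightarrow> complex^'n \<Rightarrow> complex" where
  "ci x y = (\<Sum>i\<in>UNIV. cnj (x $ i) * y $ i)"

definition dg :: "('n \<Rightarrow> complex) \<Rightarrow> complex^'n^'n" where
  "dg c = (\<chi> i j. if i = j then c i else 0)"

lemma adj_adj[simp]: "adj (adj A) = A"
  by (simp add: adj_def vec_eq_iff)

lemma adj_mult: "adj (A ** B) = adj B ** adj A"
  by (simp add: adj_def vec_eq_iff matrix_matrix_mult_def mult.commute)

lemma adj_add: "adj (A + B) = adj A + adj B"
  by (simp add: adj_def vec_eq_iff)

lemma adj_diff: "adj (A - B) = adj A - adj B"
  by (simp add: adj_def vec_eq_iff)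

lemma adj_mat: "adj (mat 1) = mat 1"
  by (simp add: adj_def vec_eq_iff mat_def)

lemma adj_dg: "adj (dg c) = dg (\<lambda>i. cnj (c i))"
  by (simp add: adj_def vec_eq_iff dg_def)

lemma dg_mult: "dg a ** dg b = dg (\<lambda>i. a i * b i)"
proof -
  have "\<And>i j. (\<Sum>k\<in>UNIV. (if i = k then a i else 0) * (if k = j then b k else 0)) = (if i = j then a i * b i else 0)"
  proof -
    fix i j
    have "(\<Sum>k\<in>UNIV. (if i = k then a i else 0) * (if k = j then b k else 0))
       = (\<Sum>k\<in>UNIV. if k = i then a i * (if i = j then b i else 0) else 0)"
      by (rule sum.cong) auto
    also have "\<dots> = a i * (if i = j then b i else 0)" by simp
    finally show "?thesis i j" by simp
  qed
  then show ?thesis by (simp add: dg_def matrix_matrix_mult_def vec_eq_iff)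
qed

lemma matrix_sub_ldistrib: "(A::'a::ring_1^'n^'m) ** (B - C) = A ** B - A ** C"
  by (simp add: matrix_matrix_mult_def vec_eq_iff sum_subtractf right_diff_distrib)

lemma matrix_sub_rdistrib: "((B::'a::ring_1^'n^'m) - C) ** A = B ** A - C ** A"
  by (simp add: matrix_matrix_mult_def vec_eq_iff sum_subtractf left_diff_distrib)

lemma ci_adj: "ci x (A *v y) = ci (adj A *v x) y"
proof -
  have "ci x (A *v y) = (\<Sum>i\<in>UNIV. \<Sum>j\<in>UNIV. cnj (x $ i) * (A $ i $ j * y $ j))"
    by (simp add: ci_def matrix_vector_mult_def sum_distrib_left)
  also have "\<dots> = (\<Sum>j\<in>UNIV. \<Sum>i\<in>UNIV. cnj (x $ i) * (A $ i $ j * y $ j))"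
    by (rule sum.swap)
  also have "\<dots> = ci (adj A *v x) y"
    by (simp add: ci_def matrix_vector_mult_def adj_def sum_distrib_left mult_ac)
  finally show ?thesis .
qed

lemma ci_cnj: "ci y x = cnj (ci x y)"
  by (simp add: ci_def mult.commute)

lemma ci_add_right: "ci x (y + z) = ci x y + ci x z"
  by (simp add: ci_def distrib_left sum.distrib)
lemma ci_diff_right: "ci x (y - z) = ci x y - ci x z"
  by (simp add: ci_def right_diff_distrib sum_subtractf)
lemma ci_add_left: "ci (y + z) x = ci y x + ci z x"
  by (simp add: ci_def distrib_right sum.distrib)
lemma ci_diff_left: "ci (y - z) x = ci y x - ci z x"
  by (simp add: ci_def left_diff_distrib sum_subtractf)
lemma ci_scale_right: "ci x (c *s y) = c * ci x y"
  by (simp add: ci_def sum_distrib_left mult_ac)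
lemma ci_scale_left: "ci (c *s y) x = cnj c * ci y x"
  by (simp add: ci_def sum_distrib_left mult_ac)
lemma ci_zero_left[simp]: "ci 0 x = 0" by (simp add: ci_def)
lemma ci_zero_right[simp]: "ci x 0 = 0" by (simp add: ci_def)

lemma ci_self: "ci x x = complex_of_real ((norm x)\<^sup>2)"
proof -
  have e: "\<And>z::complex. cnj z * z = complex_of_real ((cmod z)\<^sup>2)"
    by (metis complex_norm_square mult.commute)
  have n: "(\<Sum>i\<in>UNIV. (cmod (x $ i))\<^sup>2) = (norm x)\<^sup>2"
    by (simp add: norm_vec_def L2_set_def sum_nonneg)
  have "ci x x = (\<Sum>i\<in>UNIV. complex_of_real ((cmod (x $ i))\<^sup>2))"
    unfolding ci_def e by simp
  also have "\<dots> = complex_of_real (\<Sum>i\<in>UNIV. (cmod (x $ i))\<^sup>2)"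
    by (simp only: of_real_sum)
  finally show ?thesis by (simp only: n)
qed

lemma ci_self_eq0: "ci x x = 0 \<longleftrightarrow> x = 0"
  unfolding ci_self by simp

lemma matrix_vector_scale: "A *v (c *s x) = c *s (A *v (x::complex^'n))"
  by (simp add: matrix_vector_mult_def vec_eq_iff sum_distrib_left mult_ac)

lemma cinner_form_ci: "cinner_form A x = ci x (A *v x)"
  by (simp add: cinner_form_def ci_def)

lemma hermitian_ci: "hermitian A \<Longrightarrow> ci x (A *v y) = ci (A *v x) y"
  using ci_adj[of x A y] by (simp add: hermitian_def)

lemma hermitian_form_real: "hermitian A \<Longrightarrow> Im (ci x (A *v x)) = 0"
proof -
  assume h: "hermitian A"
  have "ci x (A *v x) = cnj (ci x (A *v x))"
    using hermitian_ci[OF h, of x x] ci_cnj[of "A *v x" x] by simp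
  then have "Im (ci x (A *v x)) = - Im (ci x (A *v x))"
    by (metis cnj.simps(2))
  then show ?thesis by simp
qed

lemma quad_zero:
  fixes a b :: real
  assumes "\<forall>t. a * t + b * t\<^sup>2 \<le> 0"
  shows "a = 0"
proof (rule ccontr)
  assume a: "a \<noteq> 0"
  define d where "d = \<bar>b\<bar> + 1"
  have p: "d > 0" by (simp add: d_def)
  define t where "t = a / d"
  have "a * t + b * t\<^sup>2 = a\<^sup>2 * (d + b) / d\<^sup>2"
    unfolding t_def using p by (simp add: power2_eq_square field_simps)
  moreover have "a\<^sup>2 * (d + b) / d\<^sup>2 > 0"
    using a p by (intro divide_pos_pos mult_pos_pos) (auto simp: d_def)
  moreover have "a * t + b * t\<^sup>2 \<le> 0" using assms by blast
  ultimately show False by simp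
qed

lemma ci_scale_both: "ci (c *s x) (H *v (c *s x)) = complex_of_real ((cmod c)\<^sup>2) * ci x (H *v x)"
proof -
  have e: "cnj c * c = complex_of_real ((cmod c)\<^sup>2)"
    by (metis complex_norm_square mult.commute)
  have "ci (c *s x) (H *v (c *s x)) = (cnj c * c) * ci x (H *v x)"
    by (simp add: matrix_vector_scale ci_scale_left ci_scale_right mult_ac)
  then show ?thesis unfolding e .
qed

lemma ci_one_iff: "ci x x = 1 \<longleftrightarrow> norm x = 1"
proof -
  have "ci x x = 1 \<longleftrightarrow> (norm x)\<^sup>2 = 1"
    unfolding ci_self by (metis of_real_1 of_real_eq_iff)
  also have "\<dots> \<longleftrightarrow> norm x = 1"
    by (metis abs_norm_cancel power2_eq_1_iff abs_1 abs_minus_cancel)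
  finally show ?thesis .
qed

lemma eigvec_exists:
  fixes H :: "complex^'n^'n" and B :: "(complex^'n) set"
  assumes h: "hermitian H"
   and Bev: "\<forall>b\<in>B. \<exists>c. H *v b = c *s b"
   and ne: "\<exists>x. (\<forall>b\<in>B. ci b x = 0) \<and> x \<noteq> 0"
  shows "\<exists>x. (\<forall>b\<in>B. ci b x = 0) \<and> ci x x = 1 \<and> (\<exists>c. H *v x = c *s x)"
proof -
  define W where "W = {x. \<forall>b\<in>B. ci b x = 0}"
  define f where "f x = Re (ci x (H *v x))" for x
  have Wadd: "x + c *s y \<in> W" if "x \<in> W" "y \<in> W" for x y c
    using that by (simp add: W_def ci_add_right ci_scale_right)
  have Wdiff: "x - c *s y \<in> W" if "x \<in> W" "y \<in> W" for x y c
    using that by (simp add: W_def ci_diff_right ci_scale_right)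
  have Wsc: "c *s y \<in> W" if "y \<in> W" for y c
    using that by (simp add: W_def ci_scale_right)
  have WH: "H *v x \<in> W" if "x \<in> W" for x
  proof -
    { fix b assume b: "b \<in> B"
      then obtain c where c: "H *v b = c *s b" using Bev by blast
      have "ci b (H *v x) = ci (H *v b) x" using hermitian_ci[OF h] .
      also have "\<dots> = 0" using that b by (simp add: c ci_scale_left W_def)
      finally have "ci b (H *v x) = 0" . }
    then show ?thesis by (simp add: W_def)
  qed
  define K where "K = W \<inter> sphere 0 1"
  have Wclosed: "closed W"
  proof -
    have "W = (\<Inter>b\<in>B. {x. ci b x = 0})" by (auto simp: W_def)
    moreover have "closed {x. ci b x = 0}" for b
      unfolding ci_def by (intro closed_Collect_eq continuous_intros)
    ultimately show ?thesis by auto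
  qed
  have Kc: "compact K" unfolding K_def using Wclosed by (intro closed_Int_compact compact_sphere)
  have ciK: "x \<in> K \<longleftrightarrow> x \<in> W \<and> ci x x = 1" for x
    by (simp add: K_def ci_one_iff)
  obtain w where w: "w \<in> W" "w \<noteq> 0" using ne W_def by auto
  have Kne: "K \<noteq> {}"
  proof -
    define s where "s = norm w"
    have s: "s > 0" using w s_def by simp
    define v where "v = complex_of_real (1/s) *s w"
    have "v \<in> W" using w Wsc v_def by simp
    moreover have "ci v v = 1"
    proof -
      have "ci v v = cnj (complex_of_real (1/s)) * (complex_of_real (1/s) * ci w w)"
        unfolding v_def ci_scale_left ci_scale_right by (simp only: mult_ac)
      moreover have "ci w w = complex_of_real (s * s)" by (simp add: ci_self s_def power2_eq_square)
      ultimately show ?thesis using s by simp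
    qed
    ultimately show ?thesis using ciK by blast
  qed
  have fc: "continuous_on K f"
    unfolding f_def ci_def matrix_vector_mult_def
    by (intro continuous_intros)
  obtain x where xK: "x \<in> K" and xmax: "\<forall>y\<in>K. f y \<le> f x"
    using continuous_attains_sup[OF Kc Kne fc] by blast
  define M where "M = f x"
  have xW: "x \<in> W" and xx: "ci x x = 1" using xK ciK by auto
  have bound: "f z \<le> M * Re (ci z z)" if "z \<in> W" for z
  proof (cases "z = 0")
    case True then show ?thesis by (simp add: f_def)
  next
    case False
    define s where "s = norm z"
    have s: "s > 0" using False s_def by simp
    define v where "v = complex_of_real (1/s) *s z"
    have "v \<in> W" using that Wsc v_def by simp
    moreover have "ci v v = 1"
    proof -
      have "ci v v = cnj (complex_of_real (1/s)) * (complex_of_real (1/s) * ci z z)"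
        unfolding v_def ci_scale_left ci_scale_right by (simp only: mult_ac)
      moreover have "ci z z = complex_of_real (s * s)" by (simp add: ci_self s_def power2_eq_square)
      ultimately show ?thesis using s by simp
    qed
    ultimately have "f v \<le> M" using ciK xmax M_def by blast
    moreover have "f v = (1/s)\<^sup>2 * f z"
    proof -
      have "cmod (1 / complex_of_real s) = 1/s" using s by (simp add: norm_divide)
      then show ?thesis unfolding v_def f_def ci_scale_both by simp
    qed
    ultimately have "(1/s)\<^sup>2 * f z \<le> M" by simp
    hence "f z \<le> M * s\<^sup>2" using s by (simp add: field_simps)
    moreover have "Re (ci z z) = s\<^sup>2" by (simp add: ci_self s_def)
    ultimately show ?thesis by simp
  qed
  have orth: "Re (ci y (H *v x)) = 0" if yW: "y \<in> W" and yx: "ci x y = 0" for y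
  proof -
    have yx': "ci y x = 0" using yx ci_cnj[of y x] by simp
    have "\<forall>t. (2 * Re (ci y (H *v x))) * t + (f y - M * Re (ci y y)) * t\<^sup>2 \<le> 0"
    proof
      fix t :: real
      define z where "z = x + complex_of_real t *s y"
      have zW: "z \<in> W" using Wadd xW yW z_def by simp
      have czz: "ci z z = 1 + complex_of_real (t\<^sup>2) * ci y y"
        by (simp add: z_def ci_add_left ci_add_right ci_scale_left ci_scale_right xx yx yx' power2_eq_square)
      have hxy: "ci x (H *v y) = cnj (ci y (H *v x))"
        using hermitian_ci[OF h, of x y] ci_cnj[of "H *v x" y] by simp
      have "ci z (H *v z) = ci x (H *v x) + complex_of_real t * ci x (H *v y)
           + complex_of_real t * ci y (H *v x) + complex_of_real (t\<^sup>2) * ci y (H *v y)"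
        by (simp add: z_def matrix_vector_right_distrib matrix_vector_scale ci_add_left ci_add_right
            ci_scale_left ci_scale_right power2_eq_square algebra_simps)
      hence "f z = M + 2 * t * Re (ci y (H *v x)) + t\<^sup>2 * f y"
        by (simp add: f_def M_def hxy)
      moreover have "f z \<le> M * (1 + t\<^sup>2 * Re (ci y y))"
        using bound[OF zW] czz by simp
      ultimately show "(2 * Re (ci y (H *v x))) * t + (f y - M * Re (ci y y)) * t\<^sup>2 \<le> 0"
        by (simp add: algebra_simps)
    qed
    then show ?thesis using quad_zero by fastforce
  qed
  have orth0: "ci y (H *v x) = 0" if yW: "y \<in> W" and yx: "ci x y = 0" for y
  proof -
    have r: "Re (ci y (H *v x)) = 0" using orth yW yx by blast
    have "\<i> *s y \<in> W" using Wsc yW by blast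
    moreover have "ci x (\<i> *s y) = 0" using yx by (simp add: ci_scale_right)
    ultimately have "Re (ci (\<i> *s y) (H *v x)) = 0" using orth by blast
    hence "Im (ci y (H *v x)) = 0" by (simp add: ci_scale_left)
    with r show ?thesis by (simp add: complex_eq_iff)
  qed
  define l where "l = ci x (H *v x)"
  define z where "z = H *v x - l *s x"
  have zW: "z \<in> W" using Wdiff WH xW z_def by blast
  have xz: "ci x z = 0" by (simp add: z_def ci_diff_right ci_scale_right xx l_def)
  have zx: "ci z x = 0" using xz ci_cnj[of z x] by simp
  have "ci z z = ci z (H *v x) - l * ci z x"
    by (simp add: z_def[of] ci_diff_right ci_scale_right)
  also have "\<dots> = 0" using orth0[OF zW xz] zx by simp
  finally have "z = 0" using ci_self_eq0 by blast
  hence "H *v x = l *s x" by (simp add: z_def)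
  then show ?thesis using xW xx W_def by blast
qed

lemma exists_orth_nonzero:
  fixes u :: "'n \<Rightarrow> complex^'n" and J :: "'n set"
  assumes "a \<notin> J"
  shows "\<exists>x. (\<forall>b\<in>u ` J. ci b x = 0) \<and> x \<noteq> 0"
proof -
  define M :: "complex^'n^'n" where "M = (\<chi> i. if i \<in> J then (\<chi> k. cnj (u i $ k)) else 0)"
  have "row a M = 0" using assms by (simp add: M_def row_def vec_eq_iff)
  hence "det M = 0" by (rule det_zero_row(2))
  hence "\<not> invertible M" using invertible_det_nz by blast
  hence "\<not> (\<exists>B. B ** M = mat 1)" using invertible_left_inverse by blast
  then obtain x where x: "M *v x = 0" "x \<noteq> 0" using matrix_left_invertible_ker(1)[of M] by blast
  have "ci (u i) x = 0" if "i \<in> J" for i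
  proof -
    have "(M *v x) $ i = ci (u i) x" using that by (simp add: M_def matrix_vector_mult_def ci_def)
    then show ?thesis using x by simp
  qed
  then show ?thesis using x by blast
qed

lemma orthonormal_eigs_set:
  fixes H :: "complex^'n^'n"
  assumes h: "hermitian H"
  shows "\<exists>u::'n \<Rightarrow> complex^'n. (\<forall>i\<in>J. \<forall>j\<in>J. ci (u i) (u j) = (if i = j then 1 else 0))
           \<and> (\<forall>i\<in>J. \<exists>c. H *v u i = c *s u i)"
proof -
  have "finite J" by simp
  then show ?thesis
  proof (induction J rule: finite_induct)
    case empty then show ?case by simp
  next
    case (insert a J)
    then obtain u where u1: "\<forall>i\<in>J. \<forall>j\<in>J. ci (u i) (u j) = (if i = j then 1 else 0)"
      and u2: "\<forall>i\<in>J. \<exists>c. H *v u i = c *s u i" by blast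
    have Bev: "\<forall>b\<in>u ` J. \<exists>c. H *v b = c *s b" using u2 by blast
    obtain v where v1: "\<forall>b\<in>u ` J. ci b v = 0" and v2: "ci v v = 1" and v3: "\<exists>c. H *v v = c *s v"
      using eigvec_exists[OF h Bev exists_orth_nonzero[OF insert(2)]] by blast
    define u' where "u' = u(a := v)"
    have "ci (u' i) (u' j) = (if i = j then 1 else 0)" if "i \<in> insert a J" "j \<in> insert a J" for i j
    proof (cases "i = a")
      case True
      show ?thesis
      proof (cases "j = a")
        case True with \<open>i = a\<close> show ?thesis by (simp add: u'_def v2)
      next
        case False
        then have "j \<in> J" using that by simp
        then have "ci (u j) v = 0" using v1 by blast
        then have "ci v (u j) = 0" using ci_cnj[of v "u j"] by simp
        then show ?thesis using True False by (simp add: u'_def)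
      qed
    next
      case False
      then have iJ: "i \<in> J" using that by simp
      show ?thesis
      proof (cases "j = a")
        case True
        then show ?thesis using v1 iJ False by (simp add: u'_def)
      next
        case False
        then have "j \<in> J" using that by simp
        then show ?thesis using u1 iJ \<open>i \<noteq> a\<close> False by (simp add: u'_def)
      qed
    qed
    moreover have "\<exists>c. H *v u' i = c *s u' i" if "i \<in> insert a J" for i
      using that u2 v3 by (cases "i = a") (auto simp: u'_def)
    ultimately show ?case by blast
  qed
qed

definition colmat :: "('n \<Rightarrow> complex^'n) \<Rightarrow> complex^'n^'n" where
  "colmat u = (\<chi> i j. u j $ i)"

lemma spectral:
  fixes H :: "complex^'n^'n"
  assumes h: "hermitian H"
  shows "\<exists>u c. (\<forall>i j. ci (u i) (u j) = (if i = j then 1 else 0))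
           \<and> (\<forall>i. H *v u i = complex_of_real (c i) *s u i)
           \<and> adj (colmat u) ** colmat u = mat 1 \<and> colmat u ** adj (colmat u) = mat 1
           \<and> H = colmat u ** dg (\<lambda>i. complex_of_real (c i)) ** adj (colmat u)
           \<and> (\<forall>i. complex_of_real (c i) = cinner_form H (u i))"
proof -
  obtain u :: "'n \<Rightarrow> complex^'n" where u1: "\<forall>i j. ci (u i) (u j) = (if i = j then 1 else 0)"
    and u2: "\<forall>i. \<exists>c. H *v u i = c *s u i"
    using orthonormal_eigs_set[OF h, of UNIV] by auto
  define c where "c i = Re (ci (u i) (H *v u i))" for i
  have cc: "H *v u i = complex_of_real (c i) *s u i" for i
  proof -
    obtain d where d: "H *v u i = d *s u i" using u2 by blast
    have "ci (u i) (H *v u i) = d" using u1 by (simp add: d ci_scale_right)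
    moreover have "Im (ci (u i) (H *v u i)) = 0" using hermitian_form_real[OF h] .
    ultimately have "d = complex_of_real (c i)" by (simp add: c_def complex_eq_iff)
    then show ?thesis using d by simp
  qed
  have cf: "complex_of_real (c i) = cinner_form H (u i)" for i
    using u1 by (simp add: cinner_form_ci cc ci_scale_right)
  define U where "U = colmat u"
  have UU: "adj U ** U = mat 1"
    using u1 by (simp add: U_def colmat_def adj_def matrix_matrix_mult_def mat_def vec_eq_iff ci_def)
  hence UU': "U ** adj U = mat 1" using matrix_left_right_inverse by blast
  have HU: "H ** U = U ** dg (\<lambda>i. complex_of_real (c i))"
  proof -
    have "(H ** U) $ i $ j = (U ** dg (\<lambda>i. complex_of_real (c i))) $ i $ j" for i j
    proof -
      have "(H ** U) $ i $ j = (H *v u j) $ i"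
        by (simp add: U_def colmat_def matrix_matrix_mult_def matrix_vector_mult_def)
      also have "\<dots> = complex_of_real (c j) * u j $ i" by (simp add: cc)
      also have "\<dots> = (U ** dg (\<lambda>i. complex_of_real (c i))) $ i $ j"
      proof -
        have "(\<Sum>k\<in>UNIV. u k $ i * (if k = j then complex_of_real (c k) else 0))
            = (\<Sum>k\<in>UNIV. if k = j then u j $ i * complex_of_real (c j) else 0)"
          by (rule sum.cong) auto
        then show ?thesis by (simp add: U_def colmat_def matrix_matrix_mult_def dg_def mult.commute)
      qed
      finally show ?thesis .
    qed
    then show ?thesis by (simp add: vec_eq_iff)
  qed
  have "H = H ** (U ** adj U)" using UU' by simp
  also have "\<dots> = U ** dg (\<lambda>i. complex_of_real (c i)) ** adj U"
    by (simp add: matrix_mul_assoc HU)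
  finally have "H = U ** dg (\<lambda>i. complex_of_real (c i)) ** adj U" .
  then show ?thesis using u1 cc UU UU' cf U_def by blast
qed

lemma adj_mult3: "adj (A ** B ** C) = adj C ** adj B ** adj A"
  by (simp add: adj_mult matrix_mul_assoc)

lemma dg_vec: "(dg e *v y) $ i = e i * y $ i"
proof -
  have "(\<Sum>k\<in>UNIV. (if i = k then e i else 0) * y $ k) = (\<Sum>k\<in>UNIV. if k = i then e i * y $ i else 0)"
    by (rule sum.cong) auto
  then show ?thesis by (simp add: dg_def matrix_vector_mult_def)
qed

lemma psd_conj_dg:
  assumes d: "\<forall>i. d i \<ge> 0"
  shows "psd (U ** dg (\<lambda>i. complex_of_real (d i)) ** adj U)"
proof -
  let ?D = "dg (\<lambda>i. complex_of_real (d i))"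
  have "adj (U ** ?D ** adj U) = U ** ?D ** adj U"
    by (simp add: adj_mult3 adj_dg)
  moreover have "0 \<le> Re (cinner_form (U ** ?D ** adj U) x)" for x
  proof -
    define y where "y = adj U *v x"
    have "cinner_form (U ** ?D ** adj U) x = ci x (U *v (?D *v y))"
      by (simp add: cinner_form_ci y_def matrix_vector_mul_assoc matrix_mul_assoc)
    also have "\<dots> = ci y (?D *v y)" by (simp add: ci_adj y_def)
    also have "\<dots> = (\<Sum>i\<in>UNIV. cnj (y $ i) * (complex_of_real (d i) * y $ i))"
      by (simp add: ci_def dg_vec)
    finally have e: "Re (cinner_form (U ** ?D ** adj U) x) = (\<Sum>i\<in>UNIV. d i * ((Re (y $ i))\<^sup>2 + (Im (y $ i))\<^sup>2))"
      by (simp add: Re_sum power2_eq_square algebra_simps)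
    show ?thesis unfolding e using d by (intro sum_nonneg) simp
  qed
  ultimately show ?thesis by (simp add: psd_def hermitian_def)
qed

lemma psd_hermitian: "psd A \<Longrightarrow> hermitian A" by (simp add: psd_def)

lemma sqrt_exists:
  assumes A: "psd A"
  shows "\<exists>S. psd S \<and> S ** S = A"
proof -
  obtain u c where u1: "\<forall>i j. ci (u i) (u j) = (if i = j then 1 else 0)"
    and UU: "adj (colmat u) ** colmat u = mat 1"
    and Aeq: "A = colmat u ** dg (\<lambda>i. complex_of_real (c i)) ** adj (colmat u)"
    and cf: "\<forall>i. complex_of_real (c i) = cinner_form A (u i)"
    using spectral[OF psd_hermitian[OF A]] by blast
  have c0: "c i \<ge> 0" for i
  proof -
    have "c i = Re (cinner_form A (u i))" using cf by (metis Re_complex_of_real)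
    then show ?thesis using A by (simp add: psd_def)
  qed
  define U where "U = colmat u"
  define S where "S = U ** dg (\<lambda>i. complex_of_real (sqrt (c i))) ** adj U"
  have "psd S" unfolding S_def by (rule psd_conj_dg) (simp add: c0)
  moreover have "S ** S = A"
  proof -
    have "S ** S = U ** dg (\<lambda>i. complex_of_real (sqrt (c i))) ** (adj U ** U) ** dg (\<lambda>i. complex_of_real (sqrt (c i))) ** adj U"
      by (simp add: S_def matrix_mul_assoc)
    also have "\<dots> = U ** (dg (\<lambda>i. complex_of_real (sqrt (c i))) ** dg (\<lambda>i. complex_of_real (sqrt (c i)))) ** adj U"
      using UU by (simp add: U_def matrix_mul_assoc)
    also have "\<dots> = U ** dg (\<lambda>i. complex_of_real (c i)) ** adj U"
    proof -
      have "(\<lambda>i. complex_of_real (sqrt (c i)) * complex_of_real (sqrt (c i))) = (\<lambda>i. complex_of_real (c i))"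
        using c0 by (simp flip: of_real_mult)
      then show ?thesis by (simp add: dg_mult)
    qed
    finally show ?thesis using Aeq U_def by simp
  qed
  ultimately show ?thesis by blast
qed

lemma real_sign_lemma:
  fixes m ra rb :: real
  assumes "ra \<ge> 0" "rb \<ge> 0" "m\<^sup>2 = 2 * m * ra" "m\<^sup>2 = - 2 * m * rb"
  shows "m = 0"
proof (cases "m > 0")
  case True
  then have "- 2 * m * rb \<le> 0" using assms(2) by simp
  then show ?thesis using assms(4) by (metis le_less_trans not_less power2_less_0 zero_less_power2)
next
  case False
  then have "2 * m * ra \<le> 0" using assms(1) by (simp add: mult_nonpos_nonneg)
  then show ?thesis using assms(3) by (metis le_less_trans not_less power2_less_0 zero_less_power2)
qed

lemma sqrt_unique:
  assumes S: "psd S" and T: "psd T" and ST: "S ** S = T ** T"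
  shows "S = T"
proof -
  have hS: "hermitian S" and hT: "hermitian T" using S T by (auto simp: psd_def)
  have hD: "hermitian (S - T)" using hS hT by (simp add: hermitian_def adj_diff)
  obtain u c where u1: "\<forall>i j. ci (u i) (u j) = (if i = j then 1 else 0)"
    and ev: "\<forall>i. (S - T) *v u i = complex_of_real (c i) *s u i"
    and Deq: "S - T = colmat u ** dg (\<lambda>i. complex_of_real (c i)) ** adj (colmat u)"
    using spectral[OF hD] by blast
  have c0: "c i = 0" for i
  proof -
    define x where "x = u i"
    define m where "m = complex_of_real (c i)"
    have xx: "ci x x = 1" using u1 by (simp add: x_def)
    have dx: "S *v x - T *v x = m *s x" using ev by (simp add: x_def m_def matrix_vector_mult_diff_rdistrib)
    define a where "a = ci x (S *v x)"
    define b where "b = ci x (T *v x)"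
    have a': "ci (S *v x) x = a" using hermitian_ci[OF hS, of x x] by (simp add: a_def)
    have b': "ci (T *v x) x = b" using hermitian_ci[OF hT, of x x] by (simp add: b_def)
    have eqn: "ci (S *v x) (S *v x) = ci (T *v x) (T *v x)"
    proof -
      have "ci (S *v x) (S *v x) = ci x ((S ** S) *v x)"
        using hermitian_ci[OF hS, of x "S *v x"] by (simp add: matrix_vector_mul_assoc)
      also have "\<dots> = ci x ((T ** T) *v x)" using ST by simp
      also have "\<dots> = ci (T *v x) (T *v x)"
        using hermitian_ci[OF hT, of x "T *v x"] by (simp add: matrix_vector_mul_assoc)
      finally show ?thesis .
    qed
    have Tx: "T *v x = S *v x - m *s x" using dx by (simp add: algebra_simps)
    have Sx: "S *v x = T *v x + m *s x" using dx by (simp add: algebra_simps)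
    have mr: "cnj m = m" by (simp add: m_def)
    have e1: "0 = - 2 * m * a + m * m"
    proof -
      have "ci (T *v x) (T *v x) = ci (S *v x) (S *v x) - m * a - m * a + m * m"
        unfolding Tx by (simp add: ci_diff_left ci_diff_right ci_scale_left ci_scale_right a' xx mr a_def[symmetric] algebra_simps)
      then show ?thesis using eqn by (simp add: algebra_simps)
    qed
    have e2: "0 = 2 * m * b + m * m"
    proof -
      have "ci (S *v x) (S *v x) = ci (T *v x) (T *v x) + m * b + m * b + m * m"
        unfolding Sx by (simp add: ci_add_left ci_add_right ci_scale_left ci_scale_right b' xx mr b_def[symmetric] algebra_simps)
      then show ?thesis using eqn by (simp add: algebra_simps)
    qed
    have ra: "Re a \<ge> 0" using S by (simp add: psd_def a_def cinner_form_ci)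
    have rb: "Re b \<ge> 0" using T by (simp add: psd_def b_def cinner_form_ci)
    have r1: "(c i)\<^sup>2 = 2 * c i * Re a"
      using arg_cong[OF e1, of Re] by (simp add: m_def power2_eq_square)
    have r2: "(c i)\<^sup>2 = - 2 * c i * Re b"
      using arg_cong[OF e2, of Re] by (simp add: m_def power2_eq_square)
    show ?thesis using real_sign_lemma[OF ra rb r1 r2] .
  qed
  have "dg (\<lambda>i. complex_of_real (c i)) = mat 0"
    by (simp add: dg_def mat_def vec_eq_iff c0)
  moreover have "A ** (0::complex^'n^'n) = 0" "(0::complex^'n^'n) ** A = 0" for A :: "complex^'n^'n"
    by (simp_all add: matrix_matrix_mult_def vec_eq_iff)
  ultimately have "S - T = 0" using Deq by simp
  then show ?thesis by simp
qed

lemma msqrt: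
  assumes "psd A"
  shows "psd (msqrt A)" "msqrt A ** msqrt A = A"
proof -
  have "\<exists>!S. psd S \<and> S ** S = A"
    using sqrt_exists[OF assms] sqrt_unique by blast
  hence "psd (msqrt A) \<and> msqrt A ** msqrt A = A"
    unfolding msqrt_def by (rule theI')
  then show "psd (msqrt A)" "msqrt A ** msqrt A = A" by auto
qed

lemma minv:
  fixes A :: "complex^'n^'n"
  assumes "invertible A"
  shows "A ** matrix_inv A = mat 1" "matrix_inv A ** A = mat 1"
proof -
  have "\<exists>A'. A ** A' = mat 1 \<and> A' ** A = mat 1" using assms by (simp add: invertible_def)
  hence "A ** matrix_inv A = mat 1 \<and> matrix_inv A ** A = mat 1"
    unfolding matrix_inv_def by (rule someI_ex)
  then show "A ** matrix_inv A = mat 1" "matrix_inv A ** A = mat 1" by auto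
qed

lemma minv_unique:
  fixes A B :: "complex^'n^'n"
  assumes "B ** A = mat 1"
  shows "matrix_inv A = B"
proof -
  have inv: "invertible A" using assms invertible_left_inverse by blast
  have "matrix_inv A = (B ** A) ** matrix_inv A" using assms by simp
  also have "\<dots> = B ** (A ** matrix_inv A)" by (simp add: matrix_mul_assoc)
  also have "\<dots> = B" using minv(1)[OF inv] by simp
  finally show ?thesis .
qed

lemma minv_herm:
  fixes A :: "complex^'n^'n"
  assumes "invertible A" "hermitian A"
  shows "adj (matrix_inv A) = matrix_inv A"
proof -
  have "adj (matrix_inv A) ** A = adj (A ** matrix_inv A)"
    using assms(2) by (simp add: adj_mult hermitian_def)
  also have "\<dots> = mat 1" using minv(1)[OF assms(1)] by (simp add: adj_mat)
  finally show ?thesis using minv_unique by metis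
qed

lemma posdef_psd: "posdef A \<Longrightarrow> psd A"
  unfolding posdef_def psd_def
  by (metis cinner_form_ci ci_zero_left less_eq_real_def zero_complex.simps(1))

lemma posdef_inv:
  fixes A :: "complex^'n^'n"
  assumes "posdef A" shows "invertible A"
proof -
  have "x = 0" if "A *v x = 0" for x
  proof (rule ccontr)
    assume "x \<noteq> 0"
    then have "0 < Re (cinner_form A x)" using assms by (simp add: posdef_def)
    moreover have "cinner_form A x = 0" by (simp add: cinner_form_ci that)
    ultimately show False by simp
  qed
  hence "\<exists>B. B ** A = mat 1" using matrix_left_invertible_ker(1) by blast
  then show ?thesis using invertible_left_inverse by blast
qed

lemma sq_inv:
  fixes S :: "complex^'n^'n"
  assumes "invertible (S ** S)" shows "invertible S"
proof -
  have "(matrix_inv (S ** S) ** S) ** S = mat 1"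
    using minv(2)[OF assms] by (simp add: matrix_mul_assoc)
  then show ?thesis using invertible_left_inverse by blast
qed

lemma psd_sandwich:
  assumes P: "psd P" and X: "hermitian X"
  shows "psd (X ** P ** X)"
proof -
  have "adj (X ** P ** X) = X ** P ** X"
    using P X by (simp add: adj_mult3 psd_def hermitian_def matrix_mul_assoc)
  moreover have "0 \<le> Re (cinner_form (X ** P ** X) x)" for x
  proof -
    have "cinner_form (X ** P ** X) x = ci (X *v x) (P *v (X *v x))"
      using hermitian_ci[OF X, of x "P *v (X *v x)"]
      by (simp add: cinner_form_ci matrix_vector_mul_assoc matrix_mul_assoc)
    then show ?thesis using P by (simp add: psd_def cinner_form_ci)
  qed
  ultimately show ?thesis by (simp add: psd_def hermitian_def)
qed

lemma trace_adj: "trace (adj M) = cnj (trace M)"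
  by (simp add: trace_def adj_def)

lemma trace_adj_self: "trace (adj X ** X) = complex_of_real (\<Sum>i\<in>UNIV. \<Sum>k\<in>UNIV. (cmod (X $ k $ i))\<^sup>2)"
proof -
  have e: "\<And>z::complex. cnj z * z = complex_of_real ((cmod z)\<^sup>2)"
    by (metis complex_norm_square mult.commute)
  show ?thesis
    by (simp add: trace_def adj_def matrix_matrix_mult_def e)
qed

lemma frob_sq: "complex_of_real ((frob_norm X)\<^sup>2) = trace (adj X ** X)"
proof -
  define s where "s = (\<Sum>i\<in>UNIV. \<Sum>k\<in>UNIV. (cmod (X $ k $ i))\<^sup>2)"
  have s0: "s \<ge> 0" unfolding s_def by (intro sum_nonneg) auto
  have "(frob_norm X)\<^sup>2 = s" unfolding frob_norm_def trace_adj_self s_def[symmetric] using s0 by simp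
  then show ?thesis by (simp add: trace_adj_self s_def)
qed

lemma key:
  fixes P R :: "complex^'n^'n"
  assumes P: "posdef P" and R: "posdef R"
  shows "adj (Pol (msqrt P ** msqrt R)) ** msqrt P = msqrt (msqrt R ** P ** msqrt R) ** matrix_inv (msqrt R)"
proof -
  define sP where "sP = msqrt P"
  define sR where "sR = msqrt R"
  have psP: "psd sP" "sP ** sP = P" using msqrt[OF posdef_psd[OF P]] sP_def by auto
  have psR: "psd sR" "sR ** sR = R" using msqrt[OF posdef_psd[OF R]] sR_def by auto
  have hP: "adj sP = sP" and hR: "adj sR = sR" using psP psR by (auto simp: psd_def hermitian_def)
  have iR: "invertible sR" using sq_inv posdef_inv[OF R] psR by metis
  have iP: "invertible sP" using sq_inv posdef_inv[OF P] psP by metis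
  define MP where "MP = sR ** P ** sR"
  have psM: "psd MP" unfolding MP_def
    using psd_sandwich[OF posdef_psd[OF P]] psR by (simp add: psd_def)
  define SP where "SP = msqrt MP"
  have pSP: "psd SP" "SP ** SP = MP" using msqrt[OF psM] SP_def by auto
  have iMP: "invertible MP" unfolding MP_def using iR posdef_inv[OF P] invertible_mult by blast
  have iSP: "invertible SP" using sq_inv iMP pSP by metis
  have hSP: "adj (matrix_inv SP) = matrix_inv SP"
    using minv_herm[OF iSP] pSP(1) by (simp add: psd_def)
  have AA: "adj (sP ** sR) ** (sP ** sR) = MP"
    by (simp add: adj_mult hP hR MP_def psP(2)[symmetric] matrix_mul_assoc)
  have "adj (Pol (sP ** sR)) ** sP = adj (sP ** sR ** matrix_inv SP) ** sP"
    unfolding Pol_def AA SP_def ..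
  also have "\<dots> = matrix_inv SP ** sR ** (sP ** sP)"
    by (simp add: adj_mult hSP hP hR matrix_mul_assoc)
  also have "\<dots> = matrix_inv SP ** (sR ** P ** sR) ** matrix_inv sR"
  proof -
    have c: "Y ** sR ** matrix_inv sR = Y" for Y
      using minv(1)[OF iR] by (metis matrix_mul_assoc matrix_mul_rid)
    show ?thesis by (simp add: psP matrix_mul_assoc c)
  qed
  also have "\<dots> = (matrix_inv SP ** SP) ** SP ** matrix_inv sR"
  proof -
    have "(matrix_inv SP ** SP) ** SP ** matrix_inv sR = matrix_inv SP ** (SP ** SP) ** matrix_inv sR"
      by (simp add: matrix_mul_assoc)
    then show ?thesis using pSP(2) MP_def by simp
  qed
  also have "\<dots> = SP ** matrix_inv sR" using minv(2)[OF iSP] by simp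
  finally show ?thesis unfolding sP_def sR_def SP_def MP_def .
qed

theorem mainTheorem2:
  fixes P Q R :: "complex^'n^'n"
  assumes "posdef P" and "posdef Q" and "posdef R"
  shows "gen_bures R P Q =
    complex_of_real ((frob_norm (adj (Pol (msqrt P ** msqrt R)) ** msqrt P
                                 - adj (Pol (msqrt Q ** msqrt R)) ** msqrt Q))\<^sup>2)"
proof -
  note P = assms(1) and Q = assms(2) and R = assms(3)
  define sR where "sR = msqrt R"
  define sRi where "sRi = matrix_inv sR"
  define Ri where "Ri = matrix_inv R"
  define SP where "SP = msqrt (sR ** P ** sR)"
  define SQ where "SQ = msqrt (sR ** Q ** sR)"
  have psR: "psd sR" "sR ** sR = R" using msqrt[OF posdef_psd[OF R]] sR_def by auto
  have hR: "adj sR = sR" using psR by (auto simp: psd_def hermitian_def)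
  have iR: "invertible sR" using sq_inv posdef_inv[OF R] psR by metis
  have hRi: "adj sRi = sRi" using minv_herm[OF iR] psR by (simp add: psd_def sRi_def)
  have r1: "sR ** sRi = mat 1" "sRi ** sR = mat 1" using minv[OF iR] sRi_def by auto
  have hRR: "adj Ri = Ri" using minv_herm[OF posdef_inv[OF R]] R by (simp add: posdef_def Ri_def)
  have RiEq: "Ri = sRi ** sRi"
  proof -
    have "(sRi ** sRi) ** R = sRi ** (sRi ** sR) ** sR"
      using psR(2) by (metis matrix_mul_assoc)
    also have "\<dots> = mat 1" using r1 by simp
    finally show ?thesis unfolding Ri_def by (rule minv_unique)
  qed
  have psM: "psd (sR ** X ** sR)" if "posdef X" for X
    using psd_sandwich[OF posdef_psd[OF that]] psR by (simp add: psd_def)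
  have pSP: "psd SP" "SP ** SP = sR ** P ** sR" using msqrt[OF psM[OF P]] SP_def by auto
  have pSQ: "psd SQ" "SQ ** SQ = sR ** Q ** sR" using msqrt[OF psM[OF Q]] SQ_def by auto
  have hSP: "adj SP = SP" and hSQ: "adj SQ = SQ" using pSP pSQ by (auto simp: psd_def hermitian_def)
  have kP: "adj (Pol (msqrt P ** msqrt R)) ** msqrt P = SP ** sRi"
    using key[OF P R] by (simp add: SP_def sR_def sRi_def)
  have kQ: "adj (Pol (msqrt Q ** msqrt R)) ** msqrt Q = SQ ** sRi"
    using key[OF Q R] by (simp add: SQ_def sR_def sRi_def)
  define X where "X = SP ** sRi - SQ ** sRi"
  define F where "F = trace (SP ** Ri ** SQ)"
  have FF: "gen_fidelity R P Q = F"
    by (simp add: gen_fidelity_def F_def SP_def SQ_def sR_def Ri_def)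
  have adjX: "adj X = sRi ** SP - sRi ** SQ"
    by (simp add: X_def adj_diff adj_mult hRi hSP hSQ)
  have XX: "adj X ** X = sRi ** (SP ** SP) ** sRi - sRi ** SP ** SQ ** sRi
                        - (sRi ** SQ ** SP ** sRi - sRi ** (SQ ** SQ) ** sRi)"
    unfolding adjX by (simp add: X_def matrix_sub_ldistrib matrix_sub_rdistrib matrix_mul_assoc)
  have sand: "sRi ** (sR ** Y ** sR) ** sRi = Y" for Y
  proof -
    have "sRi ** (sR ** Y ** sR) ** sRi = (sRi ** sR) ** Y ** (sR ** sRi)"
      by (simp add: matrix_mul_assoc)
    then show ?thesis using r1 by simp
  qed
  have cyc: "trace (sRi ** A ** sRi) = trace (Ri ** A)" for A
  proof -
    have "trace ((sRi ** A) ** sRi) = trace (sRi ** (sRi ** A))" by (rule trace_mul_sym)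
    then show ?thesis by (simp add: RiEq matrix_mul_assoc)
  qed
  have T3: "trace (sRi ** SQ ** SP ** sRi) = F"
  proof -
    have "trace (sRi ** SQ ** SP ** sRi) = trace ((Ri ** SQ) ** SP)"
      using cyc[of "SQ ** SP"] by (simp add: matrix_mul_assoc)
    also have "\<dots> = trace (SP ** (Ri ** SQ))" by (rule trace_mul_sym)
    finally show ?thesis by (simp add: F_def matrix_mul_assoc)
  qed
  have T2: "trace (sRi ** SP ** SQ ** sRi) = cnj F"
  proof -
    have "trace (sRi ** SP ** SQ ** sRi) = trace ((Ri ** SP) ** SQ)"
      using cyc[of "SP ** SQ"] by (simp add: matrix_mul_assoc)
    also have "\<dots> = trace (SQ ** (Ri ** SP))" by (rule trace_mul_sym)
    also have "\<dots> = trace (adj (SP ** Ri ** SQ))"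
      by (simp add: adj_mult3 hSP hSQ hRR matrix_mul_assoc)
    finally show ?thesis by (simp add: F_def trace_adj)
  qed
  have "trace (adj X ** X) = trace P - cnj F - (F - trace Q)"
    unfolding XX pSP(2) pSQ(2) sand trace_sub T2 T3 ..
  also have "\<dots> = trace (P + Q) - (F + cnj F)" by (simp add: trace_add)
  also have "\<dots> = gen_bures R P Q"
    by (simp add: gen_bures_def FF complex_add_cnj)
  finally show ?thesis using frob_sq[of X] kP kQ X_def by simp
qed

end
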